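(* Let $Q$ be a finitely generated $\Lambda_R$-module and let $\mathfrak p=(g)$ be a principal prime ideal of $\Lambda_R$. Assume that $Q/\mathfrak p Q$ is a pseudo-null $\Lambda_R$-module. Let $S$ be the maximal pseudo-null $\Lambda_R$-submodule of $Q$. Then the $\mathfrak p$-torsion submodule $Q[\mathfrak p]$ of $Q$ coincides with (in particular is isomorphic to) $S[\mathfrak p]$.
   Context: Fix a prime $p$. $R$ is a complete noetherian regular local ring with maximal ideal $\mathfrak m_R$, of Krull dimension $d\ge 1$, with finite residue field of characteristic $p$. $G_\infty\simeq\mathbb Z_p$ is a pro-$p$ group with topological generator $\gamma$, $G_n=G_\infty/G_\infty^{p^n}\simeq \mathbb Z/p^n\mathbb Z$, and $\Lambda_R=R[[G_\infty]]=\varprojlim_n R[G_n]$ (isomorphic to $R[[X]]$ via $\gamma\mapsto 1+X$; it is a complete noetherian regular local ring, hence a UFD). A finitely generated $\Lambda_R$-module is pseudo-null if every prime ideal in its support has height at least $2$. For an ideal $I$ and a module $M$, $M[I]$ denotes the submodule of elements killed by $I$. *)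

theory Defs
  imports Main "HOL-Computational_Algebra.Formal_Power_Series"
begin

definition is_ideal :: "'a::comm_ring_1 set \<Rightarrow> bool" where
  "is_ideal I \<longleftrightarrow> 0 \<in> I \<and> (\<forall>a\<in>I. \<forall>b\<in>I. a + b \<in> I) \<and> (\<forall>r. \<forall>a\<in>I. r * a \<in> I)"

definition ideal_gen :: "'a::comm_ring_1 set \<Rightarrow> 'a set" where
  "ideal_gen S = \<Inter>{I. is_ideal I \<and> S \<subseteq> I}"

definition prime_ideal :: "'a::comm_ring_1 set \<Rightarrow> bool" where
  "prime_ideal P \<longleftrightarrow> is_ideal P \<and> 1 \<notin> P \<and> (\<forall>a b. a * b \<in> P \<longrightarrow> a \<in> P \<or> b \<in> P)"

definition maximal_ideal :: "'a::comm_ring_1 set \<Rightarrow> bool" where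
  "maximal_ideal M \<longleftrightarrow> is_ideal M \<and> 1 \<notin> M \<and>
     (\<forall>J. is_ideal J \<and> M \<subseteq> J \<longrightarrow> J = M \<or> 1 \<in> J)"

definition noetherian_ring :: "'a::comm_ring_1 itself \<Rightarrow> bool" where
  "noetherian_ring _ \<longleftrightarrow> (\<forall>I::'a set. is_ideal I \<longrightarrow> (\<exists>F. finite F \<and> I = ideal_gen F))"

definition height_ge :: "'a::comm_ring_1 set \<Rightarrow> nat \<Rightarrow> bool" where
  "height_ge P n \<longleftrightarrow> (\<exists>f :: nat \<Rightarrow> 'a set. (\<forall>i\<le>n. prime_ideal (f i)) \<and>
      (\<forall>i<n. f i \<subset> f (Suc i)) \<and> f n = P)"

definition krull_dim_eq :: "'a::comm_ring_1 itself \<Rightarrow> nat \<Rightarrow> bool" where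
  "krull_dim_eq _ d \<longleftrightarrow> (\<exists>P::'a set. height_ge P d) \<and> \<not> (\<exists>P::'a set. height_ge P (Suc d))"

fun ideal_pow :: "'a::comm_ring_1 set \<Rightarrow> nat \<Rightarrow> 'a set" where
  "ideal_pow M 0 = UNIV"
| "ideal_pow M (Suc n) = ideal_gen {a * b | a b. a \<in> ideal_pow M n \<and> b \<in> M}"

definition local_ring_max :: "'a::comm_ring_1 set \<Rightarrow> bool" where
  "local_ring_max M \<longleftrightarrow> maximal_ideal M \<and> (\<forall>N. maximal_ideal N \<longrightarrow> N = M)"

definition adically_complete :: "'a::comm_ring_1 set \<Rightarrow> bool" where
  "adically_complete M \<longleftrightarrow> (\<Inter>n. ideal_pow M n) = {0} \<and>
     (\<forall>x :: nat \<Rightarrow> 'a. (\<forall>n. x (Suc n) - x n \<in> ideal_pow M n) \<longrightarrow>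
        (\<exists>y. \<forall>n. y - x n \<in> ideal_pow M n))"

text \<open>Complete noetherian regular local ring of Krull dimension d with maximal ideal M,
  whose residue field is finite of characteristic p.\<close>
definition standing_R :: "'a::comm_ring_1 set \<Rightarrow> nat \<Rightarrow> nat \<Rightarrow> bool" where
  "standing_R M d p \<longleftrightarrow>
     noetherian_ring TYPE('a) \<and> local_ring_max M \<and> adically_complete M \<and>
     krull_dim_eq TYPE('a) d \<and> (\<exists>xs. length xs = d \<and> M = ideal_gen (set xs)) \<and>
     finite (range (\<lambda>x. {y. x - y \<in> M})) \<and> prime p \<and> of_nat p \<in> M"

definition fin_gen_module :: "('a::comm_ring_1 \<Rightarrow> 'b::ab_group_add \<Rightarrow> 'b) \<Rightarrow> bool" where
  "fin_gen_module s \<longleftrightarrow> module s \<and> (\<exists>F. finite F \<and> module.span s F = UNIV)"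

text \<open>Support of the quotient module N/L (L \<subseteq> N submodules): the primes P with (N/L)_P \<noteq> 0,
  i.e. some m \<in> N is not killed modulo L by any element outside P.\<close>
definition supp_quot :: "('a::comm_ring_1 \<Rightarrow> 'b::ab_group_add \<Rightarrow> 'b) \<Rightarrow> 'b set \<Rightarrow> 'b set \<Rightarrow> 'a set set" where
  "supp_quot s N L = {P. prime_ideal P \<and> (\<exists>m\<in>N. \<forall>a. a \<notin> P \<longrightarrow> s a m \<notin> L)}"

definition pseudo_null_quot :: "('a::comm_ring_1 \<Rightarrow> 'b::ab_group_add \<Rightarrow> 'b) \<Rightarrow> 'b set \<Rightarrow> 'b set \<Rightarrow> bool" where
  "pseudo_null_quot s N L \<longleftrightarrow> (\<forall>P\<in>supp_quot s N L. height_ge P 2)"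

definition pseudo_null :: "('a::comm_ring_1 \<Rightarrow> 'b::ab_group_add \<Rightarrow> 'b) \<Rightarrow> 'b set \<Rightarrow> bool" where
  "pseudo_null s N \<longleftrightarrow> pseudo_null_quot s N {0}"

definition ideal_smult :: "('a::comm_ring_1 \<Rightarrow> 'b::ab_group_add \<Rightarrow> 'b) \<Rightarrow> 'a set \<Rightarrow> 'b set \<Rightarrow> 'b set" where
  "ideal_smult s I N = module.span s {s a m | a m. a \<in> I \<and> m \<in> N}"

definition torsion_by :: "('a::comm_ring_1 \<Rightarrow> 'b::ab_group_add \<Rightarrow> 'b) \<Rightarrow> 'b set \<Rightarrow> 'a set \<Rightarrow> 'b set" where
  "torsion_by s N I = {m \<in> N. \<forall>a\<in>I. s a m = 0}"

end

theory Submission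
  imports Defs
begin

lemma ideal_gen_single: "ideal_gen {g::'a::comm_ring_1} = {r * g | r. True}"
proof
  have "is_ideal {r * g | r. True}"
    unfolding is_ideal_def
    by (auto, metis mult_zero_left, metis distrib_right, metis mult.assoc)
  moreover have "g \<in> {r * g | r. True}" by (auto intro: exI[of _ 1])
  ultimately show "ideal_gen {g} \<subseteq> {r * g | r. True}"
    unfolding ideal_gen_def by blast
  show "{r * g | r. True} \<subseteq> ideal_gen {g}"
    unfolding ideal_gen_def is_ideal_def by auto
qed

lemma g_in_gen: "g \<in> ideal_gen {g::'a::comm_ring_1}"
  unfolding ideal_gen_def by auto

lemma prime_notin_mult:
  assumes "prime_ideal P" "a \<notin> P" "b \<notin> P" shows "a * b \<notin> P"
  using assms unfolding prime_ideal_def by blast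

context module
begin

lemma kill_span:
  assumes "\<forall>f\<in>F. t *s f = 0" "x \<in> span F"
  shows "t *s x = 0"
proof -
  have "subspace {x. t *s x = 0}"
    unfolding subspace_def by (auto simp: scale_right_distrib) (metis mult.commute scale_scale scale_zero_right)
  then show ?thesis using span_induct[OF assms(2), of "\<lambda>x. t *s x = 0"] assms(1) by auto
qed

lemma common_mult:
  assumes "finite F" "prime_ideal P" "subspace N"
    and "\<forall>f\<in>F. \<exists>a. a \<notin> P \<and> a *s f \<in> N"
  shows "\<exists>u. u \<notin> P \<and> (\<forall>f\<in>F. u *s f \<in> N)"
  using assms(1,4)
proof (induction F rule: finite_induct)
  case empty
  then show ?case using assms(2) unfolding prime_ideal_def by auto
next
  case (insert x F)
  then obtain u where u: "u \<notin> P" "\<forall>f\<in>F. u *s f \<in> N" by auto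
  obtain a where a: "a \<notin> P" "a *s x \<in> N" using insert.prems by auto
  have "u * a \<notin> P" using prime_notin_mult[OF assms(2) u(1) a(1)] .
  moreover have "\<forall>f\<in>insert x F. (u * a) *s f \<in> N"
  proof
    fix f assume "f \<in> insert x F"
    then show "(u * a) *s f \<in> N"
    proof
      assume "f = x"
      then have "(u * a) *s f = u *s (a *s x)" by simp
      then show ?thesis using subspace_scale[OF assms(3) a(2)] by simp
    next
      assume "f \<in> F"
      then have "a *s (u *s f) \<in> N" using subspace_scale[OF assms(3)] u(2) by blast
      then show ?thesis by (metis mult.commute scale_scale)
    qed
  qed
  ultimately show ?case by blast
qed

lemma nak:
  assumes "finite F" "prime_ideal P" "g \<in> P"
  shows "\<And>u. u \<notin> P \<Longrightarrow> (\<forall>f\<in>F. \<exists>y\<in>span F. u *s f = g *s y)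
     \<Longrightarrow> \<exists>t. t \<notin> P \<and> (\<forall>f\<in>F. t *s f = 0)"
  using assms(1)
proof (induction F rule: finite_induct)
  case empty
  then show ?case using assms(2) unfolding prime_ideal_def by auto
next
  case (insert x F u)
  have idl: "is_ideal P" using assms(2) unfolding prime_ideal_def by auto
  obtain y where y: "y \<in> span (insert x F)" "u *s x = g *s y" using insert.prems by auto
  obtain c where zc: "y - c *s x \<in> span F" using y(1) span_insert by auto
  define z where "z = y - c *s x"
  have zF: "z \<in> span F" using zc unfolding z_def .
  have yz: "y = c *s x + z" unfolding z_def by simp
  define u' where "u' = u - g * c"
  have "g * c \<in> P" using idl assms(3) unfolding is_ideal_def by (metis mult.commute)
  then have u'P: "u' \<notin> P" unfolding u'_def using insert.prems(1) idl unfolding is_ideal_def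
    by (metis diff_add_cancel)
  have u'x: "u' *s x = g *s z"
  proof -
    have "u' *s x = u *s x - (g*c) *s x" unfolding u'_def
      by (metis add_diff_cancel diff_add_cancel scale_left_distrib)
    also have "\<dots> = g *s (c *s x + z) - (g*c) *s x" using y(2) yz by simp
    also have "\<dots> = g *s z" by (simp add: scale_right_distrib)
    finally show ?thesis .
  qed
  have "\<forall>f\<in>F. \<exists>w\<in>span F. (u' * u) *s f = g *s w"
  proof
    fix f assume fF: "f \<in> F"
    obtain y where y: "y \<in> span (insert x F)" "u *s f = g *s y" using insert.prems fF by auto
    obtain d where "y - d *s x \<in> span F" using y(1) span_insert by auto
    define w where "w = y - d *s x"
    have w: "w \<in> span F" "y = d *s x + w" using \<open>y - d *s x \<in> span F\<close> unfolding w_def by auto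
    have "(u' * u) *s f = u' *s (g *s y)" using y(2) by (metis scale_scale)
    also have "\<dots> = g *s (d *s (u' *s x) + u' *s w)" using w(2)
      by (simp add: scale_right_distrib mult.commute mult.left_commute)
    also have "\<dots> = g *s ((d * g) *s z + u' *s w)" using u'x by simp
    finally show "\<exists>w\<in>span F. (u' * u) *s f = g *s w"
      using w(1) zF by (meson span_add span_scale)
  qed
  moreover have "u' * u \<notin> P" using prime_notin_mult[OF assms(2) u'P insert.prems(1)] .
  ultimately obtain t' where t': "t' \<notin> P" "\<forall>f\<in>F. t' *s f = 0" using insert.IH by blast
  have "t' * u' \<notin> P" using prime_notin_mult[OF assms(2) t'(1) u'P] .
  moreover have "\<forall>f\<in>insert x F. (t' * u') *s f = 0"
  proof
    fix f assume "f \<in> insert x F"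
    then show "(t' * u') *s f = 0"
    proof
      assume "f = x"
      have "(t' * u') *s x = g *s (t' *s z)" using u'x
        by (metis scale_scale scale_left_commute)
      also have "t' *s z = 0" using kill_span[OF t'(2) zF] .
      finally show ?thesis using \<open>f = x\<close> by simp
    next
      assume "f \<in> F" then show ?thesis using t'(2) by (metis scale_scale scale_left_commute scale_zero_right)
    qed
  qed
  ultimately show ?case by blast
qed

end

theorem lemma3p3:
  fixes M :: "'r::comm_ring_1 set" and d p :: nat
    and s :: "'r fps \<Rightarrow> 'm::ab_group_add \<Rightarrow> 'm"
    and g :: "'r fps" and S :: "'m set"
  assumes R: "standing_R M d p" and d: "d \<ge> 1"
    and Q: "fin_gen_module s"
    and pr: "prime_ideal (ideal_gen {g})"
    and QpQ: "pseudo_null_quot s UNIV (ideal_smult s (ideal_gen {g}) UNIV)"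
    and S_sub: "module.subspace s S" and S_pn: "pseudo_null s S"
    and S_max: "\<forall>N. module.subspace s N \<and> pseudo_null s N \<longrightarrow> N \<subseteq> S"
  shows "torsion_by s UNIV (ideal_gen {g}) = torsion_by s S (ideal_gen {g})"
proof -
  interpret module s using Q unfolding fin_gen_module_def by auto
  obtain F where F: "finite F" "span F = UNIV" using Q unfolding fin_gen_module_def by auto
  define T where "T = torsion_by s UNIV (ideal_gen {g})"
  have subgQ: "subspace (range (s g))"
      unfolding subspace_def
    proof (intro conjI ballI allI)
      show "0 \<in> range (s g)" by (metis rangeI scale_zero_right)
      fix x y assume "x \<in> range (s g)" "y \<in> range (s g)"
      then show "x + y \<in> range (s g)" by (auto simp flip: scale_right_distrib)
    next
      fix c x assume "x \<in> range (s g)"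
      then obtain z where "x = s g z" by auto
      then have eq: "s c x = s g (s c z)" by (metis scale_scale mult.commute)
      show "s c x \<in> range (s g)" by (subst eq) (rule rangeI)
    qed
  have gQ: "ideal_smult s (ideal_gen {g}) UNIV = range (s g)"
  proof -
    have "{s a m | a m. a \<in> ideal_gen {g} \<and> m \<in> UNIV} = range (s g)"
      unfolding ideal_gen_single
    proof (intro equalityI subsetI)
      fix y assume "y \<in> {s a m | a m. a \<in> {r * g | r. True} \<and> m \<in> UNIV}"
      then obtain r m where y: "y = s (r * g) m" by auto
      have "s (r * g) m = s g (s r m)" by (metis mult.commute scale_scale)
      then show "y \<in> range (s g)" using y by (metis rangeI)
    next
      fix y assume "y \<in> range (s g)"
      then obtain m where y: "y = s g m" by auto
      have "y = s (1 * g) m" using y by simp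
      then show "y \<in> {s a m | a m. a \<in> {r * g | r. True} \<and> m \<in> UNIV}" by blast
    qed
    then show ?thesis unfolding ideal_smult_def using subgQ by simp
  qed
  have Tsub: "subspace T"
    unfolding T_def torsion_by_def subspace_def
    by (auto simp: scale_right_distrib) (metis mult.commute scale_scale scale_zero_right)
  have Tpn: "pseudo_null s T"
    unfolding pseudo_null_def pseudo_null_quot_def
  proof
    fix P assume "P \<in> supp_quot s T {0}"
    then obtain m where P: "prime_ideal P" "m \<in> T" "\<forall>a. a \<notin> P \<longrightarrow> s a m \<noteq> 0"
      unfolding supp_quot_def by auto
    have gP: "g \<in> P" using P(2,3) g_in_gen[of g] unfolding T_def torsion_by_def by auto
    show "height_ge P 2"
    proof (rule ccontr)
      assume "\<not> height_ge P 2"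
      then have "P \<notin> supp_quot s UNIV (range (s g))"
        using QpQ gQ unfolding pseudo_null_quot_def by auto
      then have "\<forall>f\<in>F. \<exists>a. a \<notin> P \<and> s a f \<in> range (s g)"
        using P(1) unfolding supp_quot_def by auto
      then obtain u where u: "u \<notin> P" "\<forall>f\<in>F. s u f \<in> range (s g)"
        using common_mult[OF F(1) P(1) subgQ] by blast
      then have "\<forall>f\<in>F. \<exists>y\<in>span F. s u f = s g y" using F(2) by auto
      then obtain t where "t \<notin> P" "\<forall>f\<in>F. s t f = 0" using nak[OF F(1) P(1) gP u(1)] by auto
      then show False using kill_span[of F t m] F(2) P(3) by auto
    qed
  qed
  have "T \<subseteq> S" using S_max Tsub Tpn by auto
  then show ?thesis unfolding T_def torsion_by_def by auto
qed

end
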